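(* Let $A\in\mathbb{R}^{m\times n}$ with $m\ge n$ and with nonzero rows $a_1^\top,\dots,a_m^\top$, let $x\in\mathbb{R}^n$ and $b:=Ax$. Fix $l\in\{1,\dots,n\}$, let $\sigma_l$ be the $l$-th largest singular value of $A$, $v_l$ an associated right singular vector, and $\eta_l:=\sigma_l^2/\|A\|_F^2$. Let $M\in[0,1]$ with $0\le M\le(1-\sqrt{\eta_l})^2$ and set $\beta=1-\frac{\eta_l}{(1-\sqrt M)^2}$, and assume $\beta\in[0,1)$. Given $x_0\in\mathbb{R}^n$ and $y_0=0$, define for $k\ge0$ $$x_{k+1}=x_k+\frac{b_{i_k}-\langle x_k,a_{i_k}\rangle}{\|a_{i_k}\|_2^2}a_{i_k}+My_k,\qquad y_{k+1}=\beta y_k+(1-\beta)(x_{k+1}-x_k),$$ with $i_0,i_1,\dots$ independent and $\mathbb{P}(i_k=i)=\|a_i\|_2^2/\|A\|_F^2$. Then for all $k\ge0$, $$\mathbb{E}\langle x_{k+1}-x,v_l\rangle=\left(1-\frac{\eta_l}{1-\sqrt M}\right)^k\left(1+\eta_l\frac{\sqrt M(k+1)-1}{1-\sqrt M}\right)\langle x_0-x,v_l\rangle .$$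
   Context: $\|\cdot\|_2$ is the Euclidean norm, $\|A\|_F$ the Frobenius norm, $b_i$ the $i$-th entry of $b$; expectation is over the random indices. *)

theory Defs
  imports "HOL-Analysis.Analysis" "HOL-Probability.Probability"
begin

definition frobenius_norm :: "real^'n^'m \<Rightarrow> real" where
  "frobenius_norm A = sqrt (\<Sum>i\<in>UNIV. \<Sum>j\<in>UNIV. (A $ i $ j)^2)"

definition svd_right :: "real^'n^'m \<Rightarrow> (nat \<Rightarrow> real) \<Rightarrow> (nat \<Rightarrow> real^'n) \<Rightarrow> bool" where
  "svd_right A \<sigma> V \<longleftrightarrow>
     (\<forall>j\<in>{1..CARD('n)}. \<sigma> j \<ge> 0 \<and> norm (V j) = 1 \<and>
          (transpose A ** A) *v V j = ((\<sigma> j)^2) *\<^sub>R V j) \<and>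
     (\<forall>i\<in>{1..CARD('n)}. \<forall>j\<in>{1..CARD('n)}. i \<noteq> j \<longrightarrow> inner (V i) (V j) = 0) \<and>
     (\<forall>i j. 1 \<le> i \<longrightarrow> i \<le> j \<longrightarrow> j \<le> CARD('n) \<longrightarrow> \<sigma> j \<le> \<sigma> i)"

fun kacz_mom :: "real^'n^'m \<Rightarrow> real^'m \<Rightarrow> real \<Rightarrow> real \<Rightarrow> real^'n \<Rightarrow> (nat \<Rightarrow> 'm)
                  \<Rightarrow> nat \<Rightarrow> (real^'n) \<times> (real^'n)" where
  "kacz_mom A b M \<beta> x0 idx 0 = (x0, 0)"
| "kacz_mom A b M \<beta> x0 idx (Suc k) =
     (let (xk, yk) = kacz_mom A b M \<beta> x0 idx k;
          i = idx k;
          xk1 = xk + ((b $ i - inner xk (A $ i)) / (norm (A $ i))^2) *\<^sub>R (A $ i) + M *\<^sub>R yk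
      in (xk1, \<beta> *\<^sub>R yk + (1 - \<beta>) *\<^sub>R (xk1 - xk)))"

end

theory Submission
  imports Defs
begin

definition depJ :: "nat set \<Rightarrow> ((nat \<Rightarrow> 'm) \<Rightarrow> 'b) \<Rightarrow> bool" where
  "depJ J F \<longleftrightarrow> (\<forall>s t. (\<forall>j\<in>J. s j = t j) \<longrightarrow> F s = F t)"

lemma prob_inter:
  assumes P: "prob_space P" and ind: "prob_space.indep_vars P (\<lambda>_. count_space UNIV) I UNIV"
    and d: "\<forall>k i. measure P {\<omega>\<in>space P. I k \<omega> = i} = q i" and fin: "finite J"
  shows "measure P {\<omega>\<in>space P. \<forall>j\<in>J. I j \<omega> = t j} = (\<Prod>j\<in>J. q (t j))"
proof -
  interpret prob_space P by fact
  show ?thesis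
  proof (cases "J = {}")
    case True then show ?thesis by (simp add: prob_space)
  next
    case False
    from ind have "indep_sets (\<lambda>i. {I i -` A \<inter> space P | A. A \<in> sets (count_space UNIV)}) UNIV"
      unfolding indep_vars_def2 by auto
    then have "prob (\<Inter>j\<in>J. I j -` {t j} \<inter> space P) = (\<Prod>j\<in>J. prob (I j -` {t j} \<inter> space P))"
      by (rule indep_setsD) (use False fin in auto)
    moreover have "(\<Inter>j\<in>J. I j -` {t j} \<inter> space P) = {\<omega>\<in>space P. \<forall>j\<in>J. I j \<omega> = t j}" using False by auto
    moreover have "I j -` {t j} \<inter> space P = {\<omega>\<in>space P. I j \<omega> = t j}" for j by auto
    ultimately show ?thesis using d by simp
  qed
qed

lemma sets_inter:
  assumes P: "prob_space P" and ind: "prob_space.indep_vars P (\<lambda>_. count_space UNIV) I UNIV"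
    and fin: "finite J"
  shows "{\<omega>\<in>space P. \<forall>j\<in>J. I j \<omega> = t j} \<in> sets P"
proof -
  interpret prob_space P by fact
  have m: "I j \<in> measurable P (count_space UNIV)" for j using ind unfolding indep_vars_def2 by auto
  have "{\<omega>\<in>space P. I j \<omega> = t j} \<in> sets P" for j
  proof -
    have "{\<omega>\<in>space P. I j \<omega> = t j} = I j -` {t j} \<inter> space P" by auto
    then show ?thesis using m[of j] by (simp add: measurable_sets)
  qed
  then show ?thesis using fin by (intro sets.sets_Collect_finite_All) auto
qed

lemma integ_ind:
  assumes P: "prob_space P" and ind: "prob_space.indep_vars P (\<lambda>_. count_space UNIV) I UNIV"
    and fin: "finite J"
  shows "integrable P (indicat_real {\<omega>\<in>space P. \<forall>j\<in>J. I j \<omega> = t j})"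
proof -
  interpret prob_space P by fact
  show ?thesis using sets_inter[OF P ind fin, of t] by (intro integrable_real_indicator) (auto simp: less_top[symmetric])
qed

lemma sumrep:
  fixes F :: "(nat \<Rightarrow> 'm::finite) \<Rightarrow> real" and I :: "nat \<Rightarrow> 'w \<Rightarrow> 'm"
  assumes fin: "finite J" and dep: "depJ J F"
  shows "F (\<lambda>j. I j \<omega>) = (\<Sum>s\<in>PiE J (\<lambda>_. UNIV). F s * indicator {\<omega>. \<forall>j\<in>J. I j \<omega> = s j} \<omega>)"
proof -
  let ?s0 = "restrict (\<lambda>j. I j \<omega>) J"
  have "(\<Sum>s\<in>PiE J (\<lambda>_. UNIV). F s * indicator {\<omega>. \<forall>j\<in>J. I j \<omega> = s j} \<omega>)
      = (\<Sum>s\<in>PiE J (\<lambda>_. UNIV). if s = ?s0 then F s else 0)"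
  proof (rule sum.cong)
    fix s :: "nat \<Rightarrow> 'm" assume s: "s \<in> PiE J (\<lambda>_. UNIV)"
    have "(\<forall>j\<in>J. I j \<omega> = s j) \<longleftrightarrow> s = ?s0"
      using s by (auto simp: PiE_def extensional_def fun_eq_iff)
    then show "F s * indicator {\<omega>. \<forall>j\<in>J. I j \<omega> = s j} \<omega> = (if s = ?s0 then F s else 0)"
      by (auto simp: indicator_def)
  qed simp
  also have "\<dots> = F ?s0" using fin by (simp add: finite_PiE)
  also have "F ?s0 = F (\<lambda>j. I j \<omega>)" using dep unfolding depJ_def by auto
  finally show ?thesis by simp
qed

lemma sumrep_space:
  fixes F :: "(nat \<Rightarrow> 'm::finite) \<Rightarrow> real" and I :: "nat \<Rightarrow> 'w \<Rightarrow> 'm"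
  assumes fin: "finite J" and dep: "depJ J F" and w: "\<omega> \<in> space P"
  shows "F (\<lambda>j. I j \<omega>) = (\<Sum>s\<in>PiE J (\<lambda>_. UNIV). F s * indicator {\<omega>\<in>space P. \<forall>j\<in>J. I j \<omega> = s j} \<omega>)"
  unfolding sumrep[OF fin dep, of I \<omega>] using w by (intro sum.cong) (auto simp: indicator_def)

lemma integ:
  fixes F :: "(nat \<Rightarrow> 'm::finite) \<Rightarrow> real" and I :: "nat \<Rightarrow> 'w \<Rightarrow> 'm"
  assumes P: "prob_space P" and ind: "prob_space.indep_vars P (\<lambda>_. count_space UNIV) I UNIV"
    and fin: "finite J" and dep: "depJ J F"
  shows "integrable P (\<lambda>\<omega>. F (\<lambda>j. I j \<omega>))"
proof -
  interpret prob_space P by fact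
  have "integrable P (\<lambda>\<omega>. \<Sum>s\<in>PiE J (\<lambda>_. UNIV). F s * indicator {\<omega>\<in>space P. \<forall>j\<in>J. I j \<omega> = s j} \<omega>)"
    by (rule Bochner_Integration.integrable_sum, rule integrable_mult_right, rule integ_ind[OF P ind fin])
  then show ?thesis
    by (rule Bochner_Integration.integrable_cong[THEN iffD2, OF refl, rotated]) (auto simp: sumrep_space[OF fin dep])
qed

lemma expect_gen:
  fixes F :: "(nat \<Rightarrow> 'm::finite) \<Rightarrow> real" and I :: "nat \<Rightarrow> 'w \<Rightarrow> 'm"
  assumes P: "prob_space P" and ind: "prob_space.indep_vars P (\<lambda>_. count_space UNIV) I UNIV"
    and d: "\<forall>k i. measure P {\<omega>\<in>space P. I k \<omega> = i} = q i"
    and fin: "finite J" and dep: "depJ J F"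
  shows "prob_space.expectation P (\<lambda>\<omega>. F (\<lambda>j. I j \<omega>)) = (\<Sum>s\<in>PiE J (\<lambda>_. UNIV). F s * (\<Prod>j\<in>J. q (s j)))"
proof -
  interpret prob_space P by fact
  have "expectation (\<lambda>\<omega>. F (\<lambda>j. I j \<omega>)) = expectation (\<lambda>\<omega>. \<Sum>s\<in>PiE J (\<lambda>_. UNIV). F s * indicator {\<omega>\<in>space P. \<forall>j\<in>J. I j \<omega> = s j} \<omega>)"
    by (rule Bochner_Integration.integral_cong) (auto simp: sumrep_space[OF fin dep])
  also have "\<dots> = (\<Sum>s\<in>PiE J (\<lambda>_. UNIV). F s * prob {\<omega>\<in>space P. \<forall>j\<in>J. I j \<omega> = s j})"
    using sets_inter[OF P ind fin] integ_ind[OF P ind fin]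
    by (subst Bochner_Integration.integral_sum) (auto simp: Int_absorb2 sets.sets_into_space)
  also have "\<dots> = (\<Sum>s\<in>PiE J (\<lambda>_. UNIV). F s * (\<Prod>j\<in>J. q (s j)))"
    using prob_inter[OF P ind d fin] by simp
  finally show ?thesis .
qed

lemma expect_ind:
  fixes F :: "(nat \<Rightarrow> 'm::finite) \<Rightarrow> real" and I :: "nat \<Rightarrow> 'w \<Rightarrow> 'm"
  assumes P: "prob_space P" and ind: "prob_space.indep_vars P (\<lambda>_. count_space UNIV) I UNIV"
    and d: "\<forall>k i. measure P {\<omega>\<in>space P. I k \<omega> = i} = q i"
    and fin: "finite J" and dep: "depJ J F" and k: "k \<notin> J"
  shows "prob_space.expectation P (\<lambda>\<omega>. F (\<lambda>j. I j \<omega>) * indicator {\<omega>. I k \<omega> = i} \<omega>)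
     = (\<Sum>s\<in>PiE J (\<lambda>_. UNIV). F s * (\<Prod>j\<in>J. q (s j))) * q i"
proof -
  interpret prob_space P by fact
  let ?B = "\<lambda>s. {\<omega>\<in>space P. \<forall>j\<in>insert k J. I j \<omega> = (s(k:=i)) j}"
  have B: "indicator {\<omega>\<in>space P. \<forall>j\<in>J. I j \<omega> = s j} \<omega> * indicator {\<omega>. I k \<omega> = i} \<omega> = (indicator (?B s) \<omega> :: real)" for s \<omega>
    using k by (auto simp: indicator_def)
  have "expectation (\<lambda>\<omega>. F (\<lambda>j. I j \<omega>) * indicator {\<omega>. I k \<omega> = i} \<omega>) = expectation (\<lambda>\<omega>. \<Sum>s\<in>PiE J (\<lambda>_. UNIV). F s * indicator (?B s) \<omega>)"
    by (rule Bochner_Integration.integral_cong) (auto simp: sumrep_space[OF fin dep] sum_distrib_right mult.assoc B simp del: fun_upd_apply)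
  also have "\<dots> = (\<Sum>s\<in>PiE J (\<lambda>_. UNIV). F s * prob (?B s))"
    using sets_inter[OF P ind, of "insert k J"] integ_ind[OF P ind, of "insert k J"] fin
    by (subst Bochner_Integration.integral_sum) (simp_all add: Int_absorb2 sets.sets_into_space del: fun_upd_apply)
  also have "\<dots> = (\<Sum>s\<in>PiE J (\<lambda>_. UNIV). F s * (q i * (\<Prod>j\<in>J. q (s j))))"
  proof (rule sum.cong)
    fix s :: "nat \<Rightarrow> 'm"
    have "prob (?B s) = (\<Prod>j\<in>insert k J. q ((s(k:=i)) j))" by (rule prob_inter[OF P ind d]) (use fin in simp)
    also have "\<dots> = q i * (\<Prod>j\<in>J. q ((s(k:=i)) j))" using fin k by simp
    also have "(\<Prod>j\<in>J. q ((s(k:=i)) j)) = (\<Prod>j\<in>J. q (s j))" using k by (intro prod.cong) auto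
    finally show "F s * prob (?B s) = F s * (q i * (\<Prod>j\<in>J. q (s j)))" by simp
  qed simp
  finally show ?thesis by (simp add: sum_distrib_left sum_distrib_right mult_ac)
qed

lemma kacz_dep: "(\<forall>j<k. s j = t j) \<Longrightarrow> kacz_mom A b M \<beta> x0 s k = kacz_mom A b M \<beta> x0 t k"
  by (induction k) (auto simp: Let_def split_beta)

lemma dep_kacz: "k \<le> n \<Longrightarrow> depJ {..<n} (\<lambda>s. G (kacz_mom A b M \<beta> x0 s k))"
  unfolding depJ_def by (metis kacz_dep lessThan_iff order_less_le_trans)

lemma dep_kacz2: "depJ {..<Suc k} (\<lambda>s. G (kacz_mom A b M \<beta> x0 s k) (s k))"
  unfolding depJ_def by (metis kacz_dep lessThan_iff less_Suc_eq)

lemma AtA: fixes A :: "real^'n^'m" shows "(transpose A ** A) *v w = (\<Sum>i\<in>UNIV. inner (A$i) w *\<^sub>R A$i)"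
proof -
  have "((transpose A ** A) *v w) $ j = (\<Sum>i\<in>UNIV. inner (A$i) w *\<^sub>R A$i) $ j" for j
  proof -
    have "((transpose A ** A) *v w) $ j = (\<Sum>k\<in>UNIV. (\<Sum>i\<in>UNIV. A$i$j * A$i$k) * w$k)"
      by (simp add: matrix_vector_mult_def matrix_matrix_mult_def transpose_def)
    also have "\<dots> = (\<Sum>k\<in>UNIV. \<Sum>i\<in>UNIV. A$i$j * (A$i$k * w$k))"
      by (simp add: sum_distrib_right mult.assoc)
    also have "\<dots> = (\<Sum>i\<in>UNIV. \<Sum>k\<in>UNIV. A$i$j * (A$i$k * w$k))"
      by (rule sum.swap)
    also have "\<dots> = (\<Sum>i\<in>UNIV. inner (A$i) w * A$i$j)"
      by (simp add: inner_vec_def sum_distrib_left sum_distrib_right mult_ac)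
    also have "\<dots> = (\<Sum>i\<in>UNIV. inner (A$i) w *\<^sub>R A$i) $ j"
      by (simp add: sum_component)
    finally show ?thesis .
  qed
  then show ?thesis by (simp add: vec_eq_iff)
qed

lemma Av: fixes A :: "real^'n^'m" shows "(A *v x) $ i = inner (A$i) x"
  by (simp add: matrix_vector_mult_def inner_vec_def mult.commute)

lemma kacz_fst: "fst (kacz_mom A b M \<beta> x0 s (Suc k)) = fst (kacz_mom A b M \<beta> x0 s k)
   + ((b $ (s k) - inner (fst (kacz_mom A b M \<beta> x0 s k)) (A $ (s k))) / (norm (A $ (s k)))^2) *\<^sub>R (A $ (s k))
   + M *\<^sub>R snd (kacz_mom A b M \<beta> x0 s k)"
  by (simp add: Let_def split_beta)

lemma kacz_snd: "snd (kacz_mom A b M \<beta> x0 s (Suc k)) = \<beta> *\<^sub>R snd (kacz_mom A b M \<beta> x0 s k)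
   + (1 - \<beta>) *\<^sub>R (fst (kacz_mom A b M \<beta> x0 s (Suc k)) - fst (kacz_mom A b M \<beta> x0 s k))"
  by (simp add: Let_def split_beta)

theorem corollary1p4:
  fixes A :: "real^'n^'m" and x x0 :: "real^'n" and b :: "real^'m"
    and \<sigma> :: "nat \<Rightarrow> real" and V :: "nat \<Rightarrow> real^'n"
    and l :: nat and \<eta> M \<beta> :: real
    and P :: "'w measure" and I :: "nat \<Rightarrow> 'w \<Rightarrow> 'm"
  assumes mn: "CARD('m) \<ge> CARD('n)"
    and rows: "\<forall>i. A $ i \<noteq> 0"
    and b_def: "b = A *v x"
    and svd: "svd_right A \<sigma> V"
    and l: "l \<in> {1..CARD('n)}"
    and eta: "\<eta> = (\<sigma> l)^2 / (frobenius_norm A)^2"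
    and M: "0 \<le> M" "M \<le> 1" "M \<le> (1 - sqrt \<eta>)^2"
    and beta: "\<beta> = 1 - \<eta> / (1 - sqrt M)^2" "0 \<le> \<beta>" "\<beta> < 1"
    and P: "prob_space P"
    and indep: "prob_space.indep_vars P (\<lambda>_. count_space UNIV) I UNIV"
    and distr: "\<forall>k i. measure P {\<omega> \<in> space P. I k \<omega> = i} = (norm (A $ i))^2 / (frobenius_norm A)^2"
  shows "\<forall>k. prob_space.expectation P
             (\<lambda>\<omega>. inner (fst (kacz_mom A b M \<beta> x0 (\<lambda>j. I j \<omega>) (Suc k)) - x) (V l))
           = (1 - \<eta> / (1 - sqrt M))^k * (1 + \<eta> * (sqrt M * real (k+1) - 1) / (1 - sqrt M))
             * inner (x0 - x) (V l)"
proof -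
  interpret prob_space P by (rule P)
  define F2 where "F2 = (frobenius_norm A)^2"
  define q where "q i = (norm (A $ i))^2 / F2" for i
  have d: "\<forall>k i. measure P {\<omega>\<in>space P. I k \<omega> = i} = q i" using distr by (simp add: q_def F2_def)
  define v where "v = V l"
  define K where "K s k = kacz_mom A b M \<beta> x0 s k" for s k
  define U where "U k = expectation (\<lambda>\<omega>. inner (fst (K (\<lambda>j. I j \<omega>) k) - x) v)" for k
  define W where "W k = expectation (\<lambda>\<omega>. inner (snd (K (\<lambda>j. I j \<omega>) k)) v)" for k
  have intg: "integrable P (\<lambda>\<omega>. G (K (\<lambda>j. I j \<omega>) k))" for G :: "_ \<Rightarrow> real" and k
    unfolding K_def by (rule integ[OF P indep finite_lessThan dep_kacz[OF order_refl]])
  have U0: "U 0 = inner (x0 - x) v" by (simp add: U_def K_def prob_space.prob_space[OF P])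
  have W0: "W 0 = 0" by (simp add: W_def K_def)
  have sv: "(\<Sum>i\<in>UNIV. (inner (A$i) v / F2) *\<^sub>R A$i) = \<eta> *\<^sub>R v"
  proof -
    have "(transpose A ** A) *v v = (\<sigma> l)^2 *\<^sub>R v" using svd l unfolding svd_right_def v_def by blast
    then have "(\<Sum>i\<in>UNIV. inner (A$i) v *\<^sub>R A$i) = (\<sigma> l)^2 *\<^sub>R v" by (simp add: AtA)
    then have "(1/F2) *\<^sub>R (\<Sum>i\<in>UNIV. inner (A$i) v *\<^sub>R A$i) = (1/F2) *\<^sub>R ((\<sigma> l)^2 *\<^sub>R v)" by simp
    then show ?thesis by (simp add: scaleR_sum_right eta F2_def divide_inverse mult.commute)
  qed
  have rec1: "U (Suc k) = (1-\<eta>) * U k + M * W k" for k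
  proof -
    define H where "H X i = -(inner (fst X - x) (A$i) * (inner (A$i) v / (norm (A$i))^2))" for X :: "(real^'n) \<times> (real^'n)" and i :: 'm
    define T where "T s = H (K s k) (s k)" for s
    have pt: "inner (fst (K s (Suc k)) - x) v = inner (fst (K s k) - x) v + T s + M * inner (snd (K s k)) v" for s
    proof -
      have "b $ (s k) - inner (fst (K s k)) (A $ (s k)) = - inner (fst (K s k) - x) (A $ (s k))"
        unfolding b_def Av inner_commute[of "A $ (s k)" x] inner_diff_left by simp
      then show ?thesis
        unfolding K_def kacz_fst T_def H_def
        by (simp add: K_def inner_add_left inner_diff_left algebra_simps diff_divide_distrib)
    qed
    have intT: "integrable P (\<lambda>\<omega>. T (\<lambda>j. I j \<omega>))"
      unfolding T_def K_def by (rule integ[OF P indep finite_lessThan dep_kacz2])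
    have ET: "expectation (\<lambda>\<omega>. T (\<lambda>j. I j \<omega>)) = -\<eta> * U k"
    proof -
      define G where "G i s = -(inner (fst (K s k) - x) (A$i))" for i s
      define c where "c i = inner (A$i) v / (norm (A$i))^2" for i
      have T_sum: "T (\<lambda>j. I j \<omega>) = (\<Sum>i\<in>UNIV. c i * (G i (\<lambda>j. I j \<omega>) * indicator {\<omega>. I k \<omega> = i} \<omega>))" for \<omega>
      proof -
        have "(\<Sum>i\<in>UNIV. c i * (G i (\<lambda>j. I j \<omega>) * indicator {\<omega>. I k \<omega> = i} \<omega>))
           = (\<Sum>i\<in>UNIV. if i = I k \<omega> then c i * G i (\<lambda>j. I j \<omega>) else 0)"
          by (intro sum.cong) (auto simp: indicator_def)
        also have "\<dots> = c (I k \<omega>) * G (I k \<omega>) (\<lambda>j. I j \<omega>)" by simp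
        finally show ?thesis by (simp add: T_def H_def c_def G_def)
      qed
      have dG: "depJ {..<k} (G i)" for i unfolding G_def K_def by (rule dep_kacz[OF order_refl])
      have intG: "integrable P (\<lambda>\<omega>. G i (\<lambda>j. I j \<omega>))" for i
        by (rule integ[OF P indep finite_lessThan dG])
      have intGI: "integrable P (\<lambda>\<omega>. G i (\<lambda>j. I j \<omega>) * indicator {\<omega>. I k \<omega> = i} \<omega>)" for i
      proof -
        have dd: "depJ {..<Suc k} (\<lambda>s. G i s * indicator {s. s k = i} s)"
          unfolding depJ_def
        proof clarify
          fix s t :: "nat \<Rightarrow> 'm" assume h: "\<forall>j\<in>{..<Suc k}. s j = t j"
          then have "kacz_mom A b M \<beta> x0 s k = kacz_mom A b M \<beta> x0 t k" by (intro kacz_dep) auto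
          moreover have "s k = t k" using h by auto
          ultimately show "G i s * indicator {s. s k = i} s = G i t * indicator {s. s k = i} t"
            by (simp add: G_def K_def indicator_def)
        qed
        have "integrable P (\<lambda>\<omega>. (\<lambda>s. G i s * indicator {s. s k = i} s) (\<lambda>j. I j \<omega>))"
          by (rule integ[OF P indep finite_lessThan dd])
        then show ?thesis by (simp add: indicator_def)
      qed
      have "expectation (\<lambda>\<omega>. T (\<lambda>j. I j \<omega>)) = (\<Sum>i\<in>UNIV. c i * expectation (\<lambda>\<omega>. G i (\<lambda>j. I j \<omega>) * indicator {\<omega>. I k \<omega> = i} \<omega>))"
        unfolding T_sum using intGI by (subst Bochner_Integration.integral_sum) auto
      also have "\<dots> = (\<Sum>i\<in>UNIV. c i * (expectation (\<lambda>\<omega>. G i (\<lambda>j. I j \<omega>)) * q i))"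
        using expect_ind[OF P indep d finite_lessThan dG, of k] expect_gen[OF P indep d finite_lessThan dG]
        by simp
      also have "\<dots> = expectation (\<lambda>\<omega>. \<Sum>i\<in>UNIV. (c i * q i) * G i (\<lambda>j. I j \<omega>))"
        using intG by (subst Bochner_Integration.integral_sum) (auto simp: mult_ac)
      also have "\<dots> = expectation (\<lambda>\<omega>. - inner (fst (K (\<lambda>j. I j \<omega>) k) - x) (\<Sum>i\<in>UNIV. (inner (A$i) v / F2) *\<^sub>R A$i))"
      proof (rule Bochner_Integration.integral_cong[OF refl])
        fix \<omega>
        have "c i * q i = inner (A$i) v / F2" for i using rows by (simp add: c_def q_def)
        then show "(\<Sum>i\<in>UNIV. (c i * q i) * G i (\<lambda>j. I j \<omega>)) = - inner (fst (K (\<lambda>j. I j \<omega>) k) - x) (\<Sum>i\<in>UNIV. (inner (A$i) v / F2) *\<^sub>R A$i)"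
          by (simp add: G_def inner_sum_right sum_negf)
      qed
      also have "\<dots> = -\<eta> * U k" by (simp add: sv U_def)
      finally show ?thesis .
    qed
    have "U (Suc k) = expectation (\<lambda>\<omega>. inner (fst (K (\<lambda>j. I j \<omega>) k) - x) v + T (\<lambda>j. I j \<omega>) + M * inner (snd (K (\<lambda>j. I j \<omega>) k)) v)"
      by (simp add: U_def pt)
    also have "\<dots> = U k + expectation (\<lambda>\<omega>. T (\<lambda>j. I j \<omega>)) + M * W k"
      using intT intg[of "\<lambda>X. inner (fst X - x) v" k] intg[of "\<lambda>X. inner (snd X) v" k]
      by (simp add: U_def W_def)
    finally show ?thesis using ET by (simp add: algebra_simps)
  qed
  have rec2: "W (Suc k) = \<beta> * W k + (1-\<beta>) * (U (Suc k) - U k)" for k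
  proof -
    have pt: "inner (snd (K s (Suc k))) v = \<beta> * inner (snd (K s k)) v + (1-\<beta>) * (inner (fst (K s (Suc k)) - x) v - inner (fst (K s k) - x) v)" for s
      unfolding K_def kacz_snd[of A b M \<beta> x0 s k] by (simp add: inner_add_left inner_diff_left)
    show ?thesis
      using intg[of "\<lambda>X. inner (fst X - x) v" k] intg[of "\<lambda>X. inner (snd X) v" k] intg[of "\<lambda>X. inner (fst X - x) v" "Suc k"]
      by (simp add: W_def U_def pt)
  qed
  define sm where "sm = sqrt M"
  have M1: "M \<noteq> 1" using beta by auto
  have sm0: "0 \<le> sm" "sm < 1" using M M1 by (auto simp: sm_def)
  have Msm: "M = sm^2" using M by (simp add: sm_def)
  define c where "c = 1 - \<beta>"
  have c: "c = \<eta> / (1 - sm)^2" using beta by (simp add: c_def sm_def)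
  define r where "r = 1 - \<eta> / (1 - sm)"
  have ne: "1 - sm \<noteq> 0" using sm0 by simp
  have bc: "\<beta> = 1 - c" by (simp add: c_def)
  have tr: "1 - \<eta> + \<beta> + M * c = 2 * r"
    unfolding r_def Msm c bc using ne by (simp add: field_simps) (simp add: algebra_simps power2_eq_square)
  have dt: "\<beta> * (1 - \<eta>) + M * c = r^2"
    unfolding r_def Msm c bc using ne by (simp add: field_simps) (simp add: algebra_simps power2_eq_square)
  have CH: "U (Suc (Suc k)) = 2 * r * U (Suc k) - r^2 * U k" for k
  proof -
    have a: "M * W (Suc k) = \<beta> * (M * W k) + M * c * (U (Suc k) - U k)"
      unfolding rec2[of k] c_def by (simp add: algebra_simps)
    have b: "M * W k = U (Suc k) - (1 - \<eta>) * U k" using rec1[of k] by simp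
    have "U (Suc (Suc k)) = (1 - \<eta> + \<beta> + M * c) * U (Suc k) - (\<beta> * (1 - \<eta>) + M * c) * U k"
      using rec1[of "Suc k"] a b by (simp add: algebra_simps)
    then show ?thesis using tr dt by simp
  qed
  define f where "f m = 1 + \<eta> * (sm * real m - 1) / (1 - sm)" for m :: nat
  have U1: "U (Suc 0) = (1 - \<eta>) * U 0" using rec1[of 0] W0 by simp
  have f1: "f 1 = 1 - \<eta>" unfolding f_def using ne by (simp add: field_simps)
  have f2': "f 2 = 2 - 2 * \<eta> - r" unfolding f_def r_def using ne by (simp add: field_simps)
  have f2: "r * f 2 = 2 * r * (1 - \<eta>) - r^2" unfolding f2' by (simp add: algebra_simps power2_eq_square)
  have f3: "f (k + 3) = 2 * f (k + 2) - f (k + 1)" for k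
  proof -
    have fa: "f m = 1 + (\<eta> / (1 - sm)) * (sm * real m - 1)" for m by (simp add: f_def)
    show ?thesis unfolding fa by (simp add: algebra_simps)
  qed
  have main: "U (Suc k) = r^k * f (k+1) * U 0 \<and> U (Suc (Suc k)) = r^(Suc k) * f (k+2) * U 0" for k
  proof (induction k)
    case 0
    have "U (Suc (Suc 0)) = 2 * r * U (Suc 0) - r^2 * U 0" by (rule CH)
    also have "\<dots> = (2 * r * (1 - \<eta>) - r^2) * U 0" unfolding U1 by (simp add: algebra_simps)
    also have "\<dots> = r * f 2 * U 0" using f2 by simp
    finally show ?case using U1 f1 by (simp add: numeral_2_eq_2)
  next
    case (Suc k)
    have "U (Suc (Suc (Suc k))) = 2 * r * U (Suc (Suc k)) - r^2 * U (Suc k)" by (rule CH)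
    also have "\<dots> = r^(Suc (Suc k)) * (2 * f (k+2) - f (k+1)) * U 0" using Suc.IH by (simp add: algebra_simps power2_eq_square)
    also have "\<dots> = r^(Suc (Suc k)) * f (k+3) * U 0" using f3[of k] by simp
    finally show ?case using Suc.IH by (simp add: numeral_3_eq_3)
  qed
  show ?thesis
  proof
    fix k
    have "prob_space.expectation P (\<lambda>\<omega>. inner (fst (kacz_mom A b M \<beta> x0 (\<lambda>j. I j \<omega>) (Suc k)) - x) (V l)) = U (Suc k)"
      by (simp add: U_def K_def v_def)
    also have "\<dots> = r^k * f (k+1) * U 0" using main by blast
    finally show "prob_space.expectation P (\<lambda>\<omega>. inner (fst (kacz_mom A b M \<beta> x0 (\<lambda>j. I j \<omega>) (Suc k)) - x) (V l))
           = (1 - \<eta> / (1 - sqrt M))^k * (1 + \<eta> * (sqrt M * real (k+1) - 1) / (1 - sqrt M))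
             * inner (x0 - x) (V l)"
      by (simp add: r_def f_def sm_def U0 v_def)
  qed
qed

end
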